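(* Under the Gamma/Beta-prime approximation described in the context, the ergodic rate of the center user $\mathcal{R}_{i,c} = \int_{0}^{\infty} \log_2(1 + x) f_{\gamma_{i,c}}(x)\, dx$ is given by \[ \mathcal{R}_{i,c} = \frac{1}{\ln(2)\Lambda_{i,c}}\,G_{3,3}^{3,2}\left(\frac{\theta_{\mathcal{W}_{i,c}}}{\rho\zeta_{i,c}\theta_{Z_{i,c}}}\,\bigg\vert \begin{array}{c} 0,\,1-k_{\mathcal{W}_{i,c}},\,1 \\ 0,\,0,\,k_{Z_{i,c}} \end{array} \right), \] where $G_{p,q}^{m,n}(\cdot)$ is the Meijer G-function, $\Lambda_{i,c}=B(k_{Z_{i,c}},k_{\mathcal{W}_{i,c}})\,\Gamma(\kappa_{i,c})$, $\kappa_{i,c}=k_{Z_{i,c}}+k_{\mathcal{W}_{i,c}}$, and $B(\cdot,\cdot)$ is the Euler Beta function.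
   Context: Downlink two-cell STAR-RIS assisted CoMP-NOMA network: base stations BS$_i$, $i\in\{1,2\}$, each serve a two-user NOMA pair of its cell-center user U$_{c_i}$ and a shared edge user; U$_{c_i}$ suffers inter-cell interference from the other base station BS$_{i'}$, $i'\neq i$. A STAR-RIS with $K$ elements (energy-splitting, amplitude coefficient $\beta$) assists the links. With Nakagami-$m$ fading, the effective channel power gain $Z_{i,c}=(|h_{i,c}|+\sqrt{\beta}\sum_{k=1}^K|h_{R,c}||h_{i,R}|)^2$ is approximated (large $K$, moment matching) by a Gamma random variable with shape $k_{Z_{i,c}}$ and scale $\theta_{Z_{i,c}}$. With transmit SNR $\rho$ and center-user power-allocation factor $\zeta_{i,c}$, the SINR of U$_{c_i}$ for decoding its own message (after SIC) is $\gamma_{i,c}=\rho\zeta_{i,c}Z_{i,c}/\mathcal{W}_{i,c}$ with $\mathcal{W}_{i,c}=\rho|h_{i',c}|^2+1$ (interference plus normalized noise), where $|h_{i',c}|$ is Nakagami-$m$. $\mathcal{W}_{i,c}$ is approximated by a Gamma RV with shape $k_{\mathcal{W}_{i,c}}=\mu^2/(\mu^{(2)}-\mu^2)$ and scale $\theta_{\mathcal{W}_{i,c}}=(\mu^{(2)}-\mu^2)/\mu$ from its first two moments $\mu,\mu^{(2)}$. Consequently $\gamma_{i,c}$ is approximately Beta-prime distributed with PDF $f_{\gamma_{i,c}}(x)=\frac{\theta_{\mathcal{W}_{i,c}}}{\rho\zeta_{i,c}\theta_{Z_{i,c}}B(k_{Z_{i,c}},k_{\mathcal{W}_{i,c}})}\left(\frac{x\theta_{\mathcal{W}_{i,c}}}{\rho\zeta_{i,c}\theta_{Z_{i,c}}}\right)^{k_{Z_{i,c}}-1}\left(1+\frac{x\theta_{\mathcal{W}_{i,c}}}{\rho\zeta_{i,c}\theta_{Z_{i,c}}}\right)^{-(k_{Z_{i,c}}+k_{\mathcal{W}_{i,c}})}$,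 $x>0$. *)

theory Defs
  imports "HOL-Analysis.Analysis"
begin

text \<open>Reciprocal Gamma functions (rGamma, entire) are used for the denominator.\<close>
definition meijerG_kernel :: "nat \<Rightarrow> nat \<Rightarrow> real list \<Rightarrow> real list \<Rightarrow> complex \<Rightarrow> complex" where
  "meijerG_kernel m n as bs s =
     (\<Prod>j<m. Gamma (of_real (bs ! j) - s)) *
     (\<Prod>j<n. Gamma (1 - of_real (as ! j) + s)) *
     (\<Prod>j\<in>{m..<length bs}. rGamma (1 - of_real (bs ! j) + s)) *
     (\<Prod>j\<in>{n..<length as}. rGamma (of_real (as ! j) - s))"

text \<open>A real abscissa c separates the poles of Gamma(b_j - s), j<m (at s = b_j + k)
  from the poles of Gamma(1 - a_j + s), j<n (at s = a_j - 1 - k).\<close>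
definition meijerG_separating :: "nat \<Rightarrow> nat \<Rightarrow> real list \<Rightarrow> real list \<Rightarrow> real \<Rightarrow> bool" where
  "meijerG_separating m n as bs c \<longleftrightarrow>
     (\<forall>j<m. c < bs ! j) \<and> (\<forall>j<n. as ! j - 1 < c)"

text \<open>Meijer G-function for real parameters and real argument z > 0, defined by the
  Mellin--Barnes integral (1/(2 pi i)) \<integral>_L kernel(s) z^s ds along the vertical line
  L = {c + i t} (traversed from -i\<infinity> to +i\<infinity>, so ds = i dt) with c separating the two
  families of poles.  This is the standard contour L for the Meijer G-function whenever a
  separating vertical line exists and m + n > (p + q)/2 (which covers z > 0).\<close>
definition meijerG :: "nat \<Rightarrow> nat \<Rightarrow> real list \<Rightarrow> real list \<Rightarrow> real \<Rightarrow> complex" where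
  "meijerG m n as bs z =
     (let c = (SOME c. meijerG_separating m n as bs c) in
      complex_of_real (1 / (2 * pi)) *
      (LINT t|lborel. meijerG_kernel m n as bs (Complex c t) * (complex_of_real z) powr (Complex c t)))"

definition gamma_c_pdf :: "real \<Rightarrow> real \<Rightarrow> real \<Rightarrow> real \<Rightarrow> real \<Rightarrow> real \<Rightarrow> real \<Rightarrow> real" where
  "gamma_c_pdf \<rho> \<zeta> kZ \<theta>Z kW \<theta>W x =
     \<theta>W / (\<rho> * \<zeta> * \<theta>Z * Beta kZ kW) *
     (x * \<theta>W / (\<rho> * \<zeta> * \<theta>Z)) powr (kZ - 1) *
     (1 + x * \<theta>W / (\<rho> * \<zeta> * \<theta>Z)) powr (- (kZ + kW))"

definition ergodic_rate_c :: "real \<Rightarrow> real \<Rightarrow> real \<Rightarrow> real \<Rightarrow> real \<Rightarrow> real \<Rightarrow> real" where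
  "ergodic_rate_c \<rho> \<zeta> kZ \<theta>Z kW \<theta>W =
     (LBINT x:{0<..}. log 2 (1 + x) * gamma_c_pdf \<rho> \<zeta> kZ \<theta>Z kW \<theta>W x)"

end

theory Submission
  imports Defs "HOL-Probability.Probability"
begin


lemma range_exp_real: "range (exp :: real \<Rightarrow> real) = {0<..}"
  by (auto simp: image_iff) (metis exp_ln)

lemma set_integrable_lborel_lebesgue:
  fixes f :: "real \<Rightarrow> 'a::{banach, second_countable_topology}"
  assumes "f \<in> borel_measurable borel" "S \<in> sets borel"
  shows "set_integrable lborel S f \<longleftrightarrow> f absolutely_integrable_on S"
  using assms unfolding set_integrable_def
  by (subst integrable_completion[symmetric]) auto

lemma subst_exp_real:
  fixes f :: "real \<Rightarrow> real"
  assumes f[measurable]: "f \<in> borel_measurable borel"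
  shows "set_integrable lborel {0<..} f \<longleftrightarrow> integrable lborel (\<lambda>u. exp u * f (exp u))"
    and "set_integrable lborel {0<..} f \<Longrightarrow>
         (LINT u|lborel. exp u * f (exp u)) = (LBINT x:{0<..}. f x)"
proof -
  have der: "\<And>x. x \<in> UNIV \<Longrightarrow> (exp has_field_derivative exp x) (at x within UNIV)"
    by (auto intro!: derivative_eq_intros)
  have inj: "inj_on exp (UNIV::real set)" by (simp add: inj_on_def)
  note cov = has_absolute_integral_change_of_variables_1'[OF _ der inj, of f, simplified range_exp_real]
  have m2: "(\<lambda>u. exp u * f (exp u)) \<in> borel_measurable borel" by measurable
  have eqU: "(\<lambda>u. exp u * f (exp u)) absolutely_integrable_on UNIV \<longleftrightarrow> integrable lborel (\<lambda>u. exp u * f (exp u))"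
    using set_integrable_lborel_lebesgue[OF m2, of UNIV] by (simp add: set_integrable_def)
  have iff: "set_integrable lborel {0<..} f \<longleftrightarrow> f absolutely_integrable_on {0<..}"
    by (rule set_integrable_lborel_lebesgue) auto
  show 1: "set_integrable lborel {0<..} f \<longleftrightarrow> integrable lborel (\<lambda>u. exp u * f (exp u))"
    using cov[of "integral {0<..} f"] cov[of "integral UNIV (\<lambda>u. exp u * f (exp u))"]
    by (auto simp: iff eqU)
  assume si: "set_integrable lborel {0<..} f"
  then have i2: "integrable lborel (\<lambda>u. exp u * f (exp u))" using 1 by simp
  have "(\<lambda>u. \<bar>exp u\<bar> * f (exp u)) absolutely_integrable_on UNIV \<and>
        integral UNIV (\<lambda>u. \<bar>exp u\<bar> * f (exp u)) = integral {0<..} f"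
    using cov[of "integral {0<..} f"] si iff by auto
  then have "integral UNIV (\<lambda>u. exp u * f (exp u)) = integral {0<..} f" by simp
  moreover have "(LINT u|lborel. exp u * f (exp u)) = integral UNIV (\<lambda>u. exp u * f (exp u))"
    using set_borel_integral_eq_integral(2)[of UNIV "\<lambda>u. exp u * f (exp u)"] i2
    by (simp add: set_integrable_def set_lebesgue_integral_def)
  moreover have "(LBINT x:{0<..}. f x) = integral {0<..} f"
    using set_borel_integral_eq_integral(2)[OF si] .
  ultimately show "(LINT u|lborel. exp u * f (exp u)) = (LBINT x:{0<..}. f x)" by simp
qed



lemma cov_exp_real:
  fixes f :: "real \<Rightarrow> real"
  assumes ai: "f absolutely_integrable_on {0<..}"
    and m[measurable]: "(\<lambda>u. exp u * f (exp u)) \<in> borel_measurable borel"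
  shows "integrable lborel (\<lambda>u. exp u * f (exp u))"
    "(LINT u|lborel. exp u * f (exp u)) = integral {0<..} f"
proof -
  have der: "\<And>x. x \<in> UNIV \<Longrightarrow> (exp has_field_derivative exp x) (at x within UNIV)"
    by (auto intro!: derivative_eq_intros)
  have inj: "inj_on exp (UNIV::real set)" by (simp add: inj_on_def)
  note cov = has_absolute_integral_change_of_variables_1'[OF _ der inj, of f, simplified range_exp_real]
  have *: "(\<lambda>u. exp u * f (exp u)) absolutely_integrable_on UNIV \<and>
        integral UNIV (\<lambda>u. exp u * f (exp u)) = integral {0<..} f"
    using cov[of "integral {0<..} f"] ai by auto
  have eqU: "(\<lambda>u. exp u * f (exp u)) absolutely_integrable_on UNIV \<longleftrightarrow> integrable lborel (\<lambda>u. exp u * f (exp u))"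
    using set_integrable_lborel_lebesgue[OF m, of UNIV] by (simp add: set_integrable_def)
  show i2: "integrable lborel (\<lambda>u. exp u * f (exp u))" using * eqU by simp
  have "(LINT u|lborel. exp u * f (exp u)) = integral UNIV (\<lambda>u. exp u * f (exp u))"
    using set_borel_integral_eq_integral(2)[of UNIV "\<lambda>u. exp u * f (exp u)"] i2
    by (simp add: set_integrable_def set_lebesgue_integral_def)
  then show "(LINT u|lborel. exp u * f (exp u)) = integral {0<..} f" using * by simp
qed

lemma complex_integrable_ReIm:
  fixes g :: "real \<Rightarrow> complex"
  assumes "integrable lborel (\<lambda>x. Re (g x))" "integrable lborel (\<lambda>x. Im (g x))"
  shows "integrable lborel g"
proof -
  have "integrable lborel (\<lambda>x. complex_of_real (Re (g x)) + \<i> * complex_of_real (Im (g x)))"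
  proof (rule Bochner_Integration.integrable_add)
    show "integrable lborel (\<lambda>x. complex_of_real (Re (g x)))"
      by (rule integrable_of_real) (rule assms(1))
    have "integrable lborel (\<lambda>x. complex_of_real (Im (g x)))"
      by (rule integrable_of_real) (rule assms(2))
    then show "integrable lborel (\<lambda>x. \<i> * complex_of_real (Im (g x)))"
      by (rule Bochner_Integration.integrable_mult_right)
  qed
  moreover have "(\<lambda>x. complex_of_real (Re (g x)) + \<i> * complex_of_real (Im (g x))) = g"
    by (auto simp: complex_eq_iff)
  ultimately show ?thesis by simp
qed

lemma cov_exp_complex:
  fixes f :: "real \<Rightarrow> complex"
  assumes ai: "f absolutely_integrable_on {0<..}"
    and m[measurable]: "(\<lambda>u. exp u *\<^sub>R f (exp u)) \<in> borel_measurable borel"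
  shows "integrable lborel (\<lambda>u. exp u *\<^sub>R f (exp u))"
    "(LINT u|lborel. exp u *\<^sub>R f (exp u)) = integral {0<..} f"
proof -
  have aiRe: "(\<lambda>x. Re (f x)) absolutely_integrable_on {0<..}"
    using integrable_Re[OF ai[unfolded set_integrable_def]] unfolding set_integrable_def by simp
  have aiIm: "(\<lambda>x. Im (f x)) absolutely_integrable_on {0<..}"
    using integrable_Im[OF ai[unfolded set_integrable_def]] unfolding set_integrable_def by simp
  have mRe: "(\<lambda>u. exp u * Re (f (exp u))) \<in> borel_measurable borel"
  proof -
    have "(\<lambda>u. Re (exp u *\<^sub>R f (exp u))) \<in> borel_measurable borel" by measurable
    then show ?thesis by simp
  qed
  have mIm: "(\<lambda>u. exp u * Im (f (exp u))) \<in> borel_measurable borel"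
  proof -
    have "(\<lambda>u. Im (exp u *\<^sub>R f (exp u))) \<in> borel_measurable borel" by measurable
    then show ?thesis by simp
  qed
  note R = cov_exp_real[OF aiRe mRe] and I = cov_exp_real[OF aiIm mIm]
  show int: "integrable lborel (\<lambda>u. exp u *\<^sub>R f (exp u))"
    by (rule complex_integrable_ReIm) (use R I in simp_all)
  have fi: "f integrable_on {0<..}" using ai set_lebesgue_integral_eq_integral(1) by blast
  show "(LINT u|lborel. exp u *\<^sub>R f (exp u)) = integral {0<..} f"
  proof (rule complex_eqI)
    show "Re (LINT u|lborel. exp u *\<^sub>R f (exp u)) = Re (integral {0<..} f)"
      using integral_Re[OF int, symmetric] R(2) integral_unique[OF has_integral_Re[OF integrable_integral[OF fi]]] by simp
    show "Im (LINT u|lborel. exp u *\<^sub>R f (exp u)) = Im (integral {0<..} f)"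
      using integral_Im[OF int, symmetric] I(2) integral_unique[OF has_integral_Im[OF integrable_integral[OF fi]]] by simp
  qed
qed

lemma Gamma_log:
  fixes z :: complex
  assumes z: "Re z > 0"
  shows "integrable lborel (\<lambda>u. exp (z * of_real u - of_real (exp u)))"
    "(LINT u|lborel. exp (z * of_real u - of_real (exp u))) = Gamma z"
proof -
  let ?f = "\<lambda>t. of_real t powr (z - 1) / of_real (exp t) :: complex"
  have eq: "exp u *\<^sub>R ?f (exp u) = exp (z * of_real u - of_real (exp u))" for u
  proof -
    have "of_real (exp u) powr (z - 1) = exp ((z - 1) * of_real u)"
      by (simp add: powr_def Ln_of_real mult.commute)
    then show ?thesis
      by (simp add: scaleR_conv_of_real exp_diff exp_of_real[symmetric] field_simps exp_add[symmetric])
  qed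
  have m: "(\<lambda>u. exp u *\<^sub>R ?f (exp u)) \<in> borel_measurable borel"
    unfolding eq by (intro borel_measurable_continuous_onI continuous_intros)
  note C = cov_exp_complex[OF absolutely_integrable_Gamma_integral'[OF z] m]
  show "integrable lborel (\<lambda>u. exp (z * of_real u - of_real (exp u)))" using C(1) unfolding eq .
  show "(LINT u|lborel. exp (z * of_real u - of_real (exp u))) = Gamma z"
    using C(2) integral_unique[OF Gamma_integral_complex'[OF z]] unfolding eq by simp
qed



lemma Gamma_log_scaled:
  fixes z :: complex and l :: real
  assumes z: "Re z > 0" and l: "l > 0"
  shows "integrable lborel (\<lambda>u. exp (z * of_real u - of_real (l * exp u)))"
    "(LINT u|lborel. exp (z * of_real u - of_real (l * exp u))) = Gamma z * exp (- z * of_real (ln l))"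
proof -
  let ?g = "\<lambda>u. exp (z * of_real u - of_real (l * exp u))"
  have sh: "?g (- ln l + 1 * u) = exp (- z * of_real (ln l)) * exp (z * of_real u - of_real (exp u))" for u
    using l by (simp add: exp_diff exp_add exp_minus field_simps exp_of_real[symmetric] del: exp_of_real)
  note G = Gamma_log[OF z]
  have "integrable lborel (\<lambda>u. ?g (- ln l + 1 * u))"
    unfolding sh by (intro Bochner_Integration.integrable_mult_right G(1))
  then show "integrable lborel ?g"
    using lborel_integrable_real_affine_iff[of 1 ?g "- ln l"] by simp
  have "(LINT u|lborel. ?g u) = (LINT u|lborel. ?g (- ln l + 1 * u))"
    using lborel_integral_real_affine[of 1 ?g "- ln l"] by simp
  also have "\<dots> = exp (- z * of_real (ln l)) * Gamma z"
    unfolding sh by (simp add: G(2))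
  finally show "(LINT u|lborel. ?g u) = Gamma z * exp (- z * of_real (ln l))" by simp
qed

lemma Gamma_log_scaled_real:
  fixes x l :: real
  assumes x: "x > 0" and l: "l > 0"
  shows "integrable lborel (\<lambda>u. exp (x * u - l * exp u))"
    "(LINT u|lborel. exp (x * u - l * exp u)) = Gamma x * exp (- x * ln l)"
proof -
  have xz: "Re (complex_of_real x) > 0" using x by simp
  note G = Gamma_log_scaled[OF xz l]
  have eq: "Re (exp (complex_of_real x * complex_of_real u - complex_of_real (l * exp u))) = exp (x * u - l * exp u)" for u
  proof -
    have "complex_of_real x * complex_of_real u - complex_of_real (l * exp u) = complex_of_real (x * u - l * exp u)"
      by simp
    then show ?thesis by (simp only: exp_of_real Re_complex_of_real)
  qed
  show "integrable lborel (\<lambda>u. exp (x * u - l * exp u))"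
    using integrable_Re[OF G(1)] unfolding eq .
  have "(LINT u|lborel. exp (x * u - l * exp u)) = Re (Gamma (complex_of_real x) * exp (- complex_of_real x * complex_of_real (ln l)))"
    using integral_Re[OF G(1)] G(2) unfolding eq by simp
  also have "\<dots> = Gamma x * exp (- x * ln l)"
  proof -
    have "exp (- complex_of_real x * complex_of_real (ln l)) = complex_of_real (exp (- x * ln l))"
      by (metis exp_of_real of_real_minus of_real_mult)
    then show ?thesis by (simp add: Gamma_complex_of_real)
  qed
  finally show "(LINT u|lborel. exp (x * u - l * exp u)) = Gamma x * exp (- x * ln l)" .
qed

lemma Gamma_log_real:
  fixes x :: real
  assumes x: "x > 0"
  shows "integrable lborel (\<lambda>u. exp (x * u - exp u))"
    "(LINT u|lborel. exp (x * u - exp u)) = Gamma x"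
  using Gamma_log_scaled_real[OF x, of 1] by simp_all




lemma Beta_log:
  fixes z :: complex and k :: real
  assumes z: "Re z > 0" and zk: "Re z < k"
  shows "integrable lborel (\<lambda>u. exp (z * of_real u) * of_real ((1 + exp u) powr (- k)))"
    "(LINT u|lborel. exp (z * of_real u) * of_real ((1 + exp u) powr (- k)))
       = Gamma z * Gamma (of_real k - z) / of_real (Gamma k)"
proof -
  have k: "k > 0" using z zk by simp
  define x where "x = Re z"
  have x: "x > 0" "x < k" using z zk by (auto simp: x_def)
  define F where "F = (\<lambda>q u. exp (z * of_real u) * of_real (exp (k * q - (1 + exp u) * exp q)))"
  have Fm: "case_prod F \<in> borel_measurable (lborel \<Otimes>\<^sub>M lborel)"
    unfolding F_def by measurable
  have nF: "norm (F q u) = exp (k * q - exp q) * exp (x * u - exp q * exp u)" for q u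
    by (simp add: F_def norm_mult norm_exp_eq_Re x_def exp_add[symmetric] algebra_simps)
  have inner_norm: "(LINT u|lborel. norm (F q u)) = Gamma x * exp ((k - x) * q - exp q)" for q
  proof -
    have "(LINT u|lborel. norm (F q u)) = exp (k * q - exp q) * (LINT u|lborel. exp (x * u - exp q * exp u))"
      unfolding nF by simp
    also have "\<dots> = exp (k * q - exp q) * (Gamma x * exp (- x * ln (exp q)))"
      using Gamma_log_scaled_real(2)[OF x(1), of "exp q"] by simp
    also have "\<dots> = Gamma x * exp ((k - x) * q - exp q)"
      by (simp add: exp_add[symmetric] algebra_simps)
    finally show ?thesis .
  qed
  have int1: "integrable lborel (\<lambda>q. LINT u|lborel. norm (F q u))"
  proof -
    have "integrable lborel (\<lambda>u. exp ((k - x) * u - exp u))" using x by (intro Gamma_log_real) simp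
    then show ?thesis unfolding inner_norm by (rule Bochner_Integration.integrable_mult_right)
  qed
  have int2: "integrable lborel (\<lambda>u. F q u)" for q
  proof -
    have "F q u = of_real (exp (k * q - exp q)) * exp (z * of_real u - of_real (exp q * exp u))" for u
      by (simp add: F_def exp_add[symmetric] exp_diff[symmetric] exp_of_real[symmetric] algebra_simps del: exp_of_real)
    then show ?thesis
      using Gamma_log_scaled(1)[OF z, of "exp q"]
      by (simp add: Bochner_Integration.integrable_mult_right)
  qed
  have Fint: "integrable (lborel \<Otimes>\<^sub>M lborel) (case_prod F)"
    by (rule lborel_pair.Fubini_integrable[OF Fm]) (use int1 int2 in auto)
  have A: "(LINT q|lborel. F q u) = exp (z * of_real u) * of_real (Gamma k * (1 + exp u) powr (- k))" for u
  proof -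
    have "(LINT q|lborel. F q u) = exp (z * of_real u) * of_real (LINT q|lborel. exp (k * q - (1 + exp u) * exp q))"
      by (simp add: F_def)
    also have "(LINT q|lborel. exp (k * q - (1 + exp u) * exp q)) = Gamma k * exp (- k * ln (1 + exp u))"
      using Gamma_log_scaled_real(2)[OF k, of "1 + exp u"] by (simp add: add_pos_pos)
    also have "exp (- k * ln (1 + exp u)) = (1 + exp u) powr (- k)"
      by (simp add: powr_def add_pos_pos) (metis add_pos_pos exp_gt_zero less_irrefl zero_less_one)
    finally show ?thesis .
  qed
  have B: "(LINT u|lborel. F q u) = Gamma z * exp ((of_real k - z) * of_real q - of_real (exp q))" for q
  proof -
    have "F q u = of_real (exp (k * q - exp q)) * exp (z * of_real u - of_real (exp q * exp u))" for u
      by (simp add: F_def exp_add[symmetric] exp_diff[symmetric] exp_of_real[symmetric] algebra_simps del: exp_of_real)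
    then have "(LINT u|lborel. F q u) = of_real (exp (k * q - exp q)) * (Gamma z * exp (- z * of_real (ln (exp q))))"
      using Gamma_log_scaled(2)[OF z, of "exp q"] by simp
    also have "\<dots> = Gamma z * exp ((of_real k - z) * of_real q - of_real (exp q))"
      by (simp add: exp_add[symmetric] exp_diff[symmetric] exp_of_real[symmetric] algebra_simps del: exp_of_real)
    finally show ?thesis .
  qed
  have kz: "Re (of_real k - z) > 0" using zk by simp
  have "(LINT u|lborel. LINT q|lborel. F q u) = (LINT q|lborel. LINT u|lborel. F q u)"
    by (rule lborel_pair.Fubini_integral[OF Fint])
  also have "\<dots> = Gamma z * Gamma (of_real k - z)"
    unfolding B using Gamma_log(2)[OF kz] by simp
  finally have eq: "(LINT u|lborel. exp (z * of_real u) * of_real (Gamma k * (1 + exp u) powr (- k))) = Gamma z * Gamma (of_real k - z)"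
    unfolding A .
  have intA: "integrable lborel (\<lambda>u. exp (z * of_real u) * of_real (Gamma k * (1 + exp u) powr (- k)))"
    using lborel_pair.integrable_snd[OF Fint] unfolding A .
  have Gk: "Gamma k \<noteq> 0" using k by (simp add: Gamma_real_pos less_imp_neq[symmetric])
  have fe: "(\<lambda>u. exp (z * of_real u) * of_real ((1 + exp u) powr (- k))) =
      (\<lambda>u. (exp (z * of_real u) * of_real (Gamma k * (1 + exp u) powr (- k))) / of_real (Gamma k))"
    using Gk by (auto simp: field_simps)
  show "integrable lborel (\<lambda>u. exp (z * of_real u) * of_real ((1 + exp u) powr (- k)))"
    unfolding fe by (intro integrable_divide intA)
  show "(LINT u|lborel. exp (z * of_real u) * of_real ((1 + exp u) powr (- k)))
       = Gamma z * Gamma (of_real k - z) / of_real (Gamma k)"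
    unfolding fe by (simp only: integral_divide_zero eq)
qed



lemma std_normal_int: "integrable lborel std_normal_density" "(LINT x|lborel. std_normal_density x) = 1"
  using std_normal_moment_even[of 0] by (auto dest: has_bochner_integral_integrable has_bochner_integral_integral_eq)

lemma gauss_ft:
  fixes s y :: real
  assumes s: "s > 0"
  shows "(CLINT t|lborel. iexp (t * y) * of_real (exp (- (s * t)\<^sup>2 / 2)))
         = of_real (sqrt (2 * pi) / s * exp (- (y / s)\<^sup>2 / 2))"
proof -
  have c: "char std_normal_distribution (y / s) = of_real (exp (- (y / s)\<^sup>2 / 2))"
    by (simp add: char_std_normal_distribution)
  have "char std_normal_distribution (y / s) = (CLINT x|lborel. std_normal_density x *\<^sub>R iexp (y / s * x))"
    unfolding char_def by (subst integral_density) auto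
  also have "\<dots> = s *\<^sub>R (CLINT t|lborel. std_normal_density (0 + s * t) *\<^sub>R iexp (y / s * (0 + s * t)))"
    using lborel_integral_real_affine[of s "\<lambda>x. std_normal_density x *\<^sub>R iexp (y / s * x)" 0] s by simp
  also have "\<dots> = (s / sqrt (2 * pi)) *\<^sub>R (CLINT t|lborel. iexp (t * y) * of_real (exp (- (s * t)\<^sup>2 / 2)))"
  proof -
    have e: "(\<lambda>t. std_normal_density (0 + s * t) *\<^sub>R iexp (y / s * (0 + s * t))) =
      (\<lambda>t. of_real (1 / sqrt (2 * pi)) * (iexp (t * y) * of_real (exp (- (s * t)\<^sup>2 / 2))))"
    proof
      fix t
      have "y / s * (0 + s * t) = t * y" using s by simp
      then show "std_normal_density (0 + s * t) *\<^sub>R iexp (y / s * (0 + s * t)) =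
        of_real (1 / sqrt (2 * pi)) * (iexp (t * y) * of_real (exp (- (s * t)\<^sup>2 / 2)))"
        by (simp only: std_normal_density_def scaleR_conv_of_real of_real_mult) (simp add: mult_ac)
    qed
    show ?thesis unfolding e integral_mult_right_zero by (simp add: scaleR_conv_of_real)
  qed
  finally have "(s / sqrt (2 * pi)) *\<^sub>R (CLINT t|lborel. iexp (t * y) * of_real (exp (- (s * t)\<^sup>2 / 2)))
      = of_real (exp (- (y / s)\<^sup>2 / 2))" using c by simp
  then show ?thesis using s
    by (simp add: scaleR_conv_of_real field_simps)
qed

lemma gauss_int:
  fixes s :: real assumes s: "s > 0"
  shows "integrable lborel (\<lambda>t. exp (- (s * t)\<^sup>2 / 2))"
proof -
  have "integrable lborel (\<lambda>t. sqrt (2 * pi) * std_normal_density (0 + s * t))"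
    using lborel_integrable_real_affine[OF std_normal_int(1), of s 0] s
    by (intro Bochner_Integration.integrable_mult_right) auto
  then show ?thesis by (simp add: std_normal_density_def)
qed



lemma iexp_diff: "iexp (t * (u - x0)) = iexp (t * u) * iexp (- (t * x0))"
proof -
  have "\<i> * complex_of_real (t * (u - x0)) = \<i> * complex_of_real (t * u) + \<i> * complex_of_real (- (t * x0))"
    by (simp add: algebra_simps)
  then show ?thesis by (simp only: exp_add)
qed

lemma fourier_inversion:
  fixes h :: "real \<Rightarrow> real" and x0 B :: real
  assumes hint: "integrable lborel h" and hb: "\<And>u. \<bar>h u\<bar> \<le> B" and hc: "isCont h x0"
    and phint: "integrable lborel (\<lambda>t. CLINT u|lborel. of_real (h u) * iexp (t * u))"
  shows "(CLINT t|lborel. (CLINT u|lborel. of_real (h u) * iexp (t * u)) * iexp (- (t * x0)))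
         = of_real (2 * pi * h x0)"
proof -
  define \<phi> where "\<phi> t = (CLINT u|lborel. of_real (h u) * iexp (t * u))" for t
  have hm[measurable]: "h \<in> borel_measurable borel" using borel_measurable_integrable[OF hint] by simp
  have phm[measurable]: "\<phi> \<in> borel_measurable borel"
    using borel_measurable_integrable[OF phint] by (simp add: \<phi>_def[abs_def])
  have phint': "integrable lborel \<phi>" using phint by (simp add: \<phi>_def[abs_def])
  define A where "A s = (CLINT t|lborel. \<phi> t * iexp (- (t * x0)) * of_real (exp (- (s * t)\<^sup>2 / 2)))" for s
  have claim1: "A s = of_real (2 * pi * (LINT z|lborel. h (x0 + s * z) * std_normal_density z))" if s: "s > 0" for s
  proof -
    define F where "F t u = of_real (h u) * iexp (t * (u - x0)) * of_real (exp (- (s * t)\<^sup>2 / 2))" for t u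
    have Fm: "case_prod F \<in> borel_measurable (lborel \<Otimes>\<^sub>M lborel)" unfolding F_def by measurable
    have nF: "norm (F t u) = \<bar>h u\<bar> * exp (- (s * t)\<^sup>2 / 2)" for t u
      by (simp add: F_def norm_mult)
    have i1: "integrable lborel (\<lambda>t. LINT u|lborel. norm (F t u))"
      unfolding nF using gauss_int[OF s] by simp
    have i2: "integrable lborel (F t)" for t
    proof -
      have a: "integrable lborel (\<lambda>u. h u * exp (- (s * t)\<^sup>2 / 2))" using hint by simp
      have b: "F t \<in> borel_measurable lborel" unfolding F_def by measurable
      have c: "AE u in lborel. norm (F t u) \<le> norm (h u * exp (- (s * t)\<^sup>2 / 2))"
        by (simp add: nF abs_mult)
      show ?thesis by (rule Bochner_Integration.integrable_bound[OF a b c])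
    qed
    have Fint: "integrable (lborel \<Otimes>\<^sub>M lborel) (case_prod F)"
      by (rule lborel_pair.Fubini_integrable[OF Fm]) (use i1 i2 in auto)
    have L: "(LINT u|lborel. F t u) = \<phi> t * iexp (- (t * x0)) * of_real (exp (- (s * t)\<^sup>2 / 2))" for t
    proof -
      have "F t u = of_real (h u) * iexp (t * u) * (iexp (- (t * x0)) * of_real (exp (- (s * t)\<^sup>2 / 2)))" for u
        by (simp only: F_def iexp_diff mult_ac)
      then show ?thesis by (simp add: \<phi>_def)
    qed
    have R: "(LINT t|lborel. F t u) = of_real (h u * (sqrt (2 * pi) / s * exp (- ((u - x0) / s)\<^sup>2 / 2)))" for u
    proof -
      have "(LINT t|lborel. F t u) = of_real (h u) * (CLINT t|lborel. iexp (t * (u - x0)) * of_real (exp (- (s * t)\<^sup>2 / 2)))"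
        by (simp add: F_def mult.assoc)
      also have "\<dots> = of_real (h u) * of_real (sqrt (2 * pi) / s * exp (- ((u - x0) / s)\<^sup>2 / 2))"
        by (simp only: gauss_ft[OF s])
      finally show ?thesis by simp
    qed
    have "A s = (LINT t|lborel. LINT u|lborel. F t u)" by (simp add: A_def L)
    also have "\<dots> = (LINT u|lborel. LINT t|lborel. F t u)"
      by (rule lborel_pair.Fubini_integral[OF Fint, symmetric])
    also have "\<dots> = of_real (LINT u|lborel. h u * (sqrt (2 * pi) / s * exp (- ((u - x0) / s)\<^sup>2 / 2)))"
      by (simp only: R integral_complex_of_real)
    also have "(LINT u|lborel. h u * (sqrt (2 * pi) / s * exp (- ((u - x0) / s)\<^sup>2 / 2)))
       = \<bar>s\<bar> *\<^sub>R (LINT z|lborel. h (x0 + s * z) * (sqrt (2 * pi) / s * exp (- ((x0 + s * z - x0) / s)\<^sup>2 / 2)))"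
      using s by (intro lborel_integral_real_affine) simp
    also have "\<dots> = (LINT z|lborel. 2 * pi * (h (x0 + s * z) * std_normal_density z))"
    proof -
      have e: "\<bar>s\<bar> *\<^sub>R (h (x0 + s * z) * (sqrt (2 * pi) / s * exp (- ((x0 + s * z - x0) / s)\<^sup>2 / 2)))
           = 2 * pi * (h (x0 + s * z) * std_normal_density z)" for z
      proof -
        have "sqrt (2 * pi) * sqrt (2 * pi) = 2 * pi" by simp
        then show ?thesis using s
          by (simp add: std_normal_density_def field_simps)
      qed
      show ?thesis by (simp only: integral_scaleR_right[symmetric] e)
    qed
    also have "\<dots> = 2 * pi * (LINT z|lborel. h (x0 + s * z) * std_normal_density z)"
      by simp
    finally show ?thesis .
  qed
  define sq where "sq n = 1 / real (Suc n)" for n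
  have sqpos: "sq n > 0" for n by (simp add: sq_def)
  have sq0: "sq \<longlonglongrightarrow> 0" unfolding sq_def by (rule LIMSEQ_inverse_real_of_nat[unfolded inverse_eq_divide])
  have lim1: "(\<lambda>n. A (sq n)) \<longlonglongrightarrow> (CLINT t|lborel. \<phi> t * iexp (- (t * x0)))"
    unfolding A_def
  proof (rule integral_dominated_convergence[where w = "\<lambda>t. norm (\<phi> t)"])
    show "(\<lambda>t. \<phi> t * iexp (- (t * x0))) \<in> borel_measurable lborel" by measurable
    show "(\<lambda>t. \<phi> t * iexp (- (t * x0)) * of_real (exp (- (sq n * t)\<^sup>2 / 2))) \<in> borel_measurable lborel" for n
      by measurable
    show "integrable lborel (\<lambda>t. norm (\<phi> t))" using phint' by simp
    show "AE t in lborel. (\<lambda>n. \<phi> t * iexp (- (t * x0)) * of_real (exp (- (sq n * t)\<^sup>2 / 2))) \<longlonglongrightarrow> \<phi> t * iexp (- (t * x0))"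
    proof (rule AE_I2)
      fix t
      have "(\<lambda>n. exp (- (sq n * t)\<^sup>2 / 2)) \<longlonglongrightarrow> exp (- (0 * t)\<^sup>2 / 2)"
        by (intro tendsto_intros sq0) simp
      then have "(\<lambda>n. \<phi> t * iexp (- (t * x0)) * of_real (exp (- (sq n * t)\<^sup>2 / 2))) \<longlonglongrightarrow> \<phi> t * iexp (- (t * x0)) * of_real 1"
        by (intro tendsto_intros) simp
      then show "(\<lambda>n. \<phi> t * iexp (- (t * x0)) * of_real (exp (- (sq n * t)\<^sup>2 / 2))) \<longlonglongrightarrow> \<phi> t * iexp (- (t * x0))"
        by simp
    qed
    show "AE t in lborel. norm (\<phi> t * iexp (- (t * x0)) * of_real (exp (- (sq n * t)\<^sup>2 / 2))) \<le> norm (\<phi> t)" for n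
    proof (rule AE_I2)
      fix t
      have "exp (- ((sq n * t)\<^sup>2 / 2)) \<le> 1" by simp
      then have "cmod (\<phi> t) * exp (- ((sq n * t)\<^sup>2 / 2)) \<le> cmod (\<phi> t) * 1"
        by (intro mult_left_mono) auto
      then show "norm (\<phi> t * iexp (- (t * x0)) * of_real (exp (- (sq n * t)\<^sup>2 / 2))) \<le> norm (\<phi> t)"
        by (simp add: norm_mult)
    qed
  qed
  have lim2: "(\<lambda>n. LINT z|lborel. h (x0 + sq n * z) * std_normal_density z) \<longlonglongrightarrow> (LINT z|lborel. h x0 * std_normal_density z)"
  proof (rule integral_dominated_convergence[where w = "\<lambda>z. B * std_normal_density z"])
    show "(\<lambda>z. h x0 * std_normal_density z) \<in> borel_measurable lborel" by measurable
    show "(\<lambda>z. h (x0 + sq n * z) * std_normal_density z) \<in> borel_measurable lborel" for n by measurable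
    show "integrable lborel (\<lambda>z. B * std_normal_density z)" using std_normal_int(1) by simp
    show "AE z in lborel. (\<lambda>n. h (x0 + sq n * z) * std_normal_density z) \<longlonglongrightarrow> h x0 * std_normal_density z"
    proof (rule AE_I2)
      fix z
      have "(\<lambda>n. x0 + sq n * z) \<longlonglongrightarrow> x0 + 0 * z" by (intro tendsto_intros sq0)
      then have "(\<lambda>n. h (x0 + sq n * z)) \<longlonglongrightarrow> h x0"
        using isCont_tendsto_compose[OF hc] by simp
      then show "(\<lambda>n. h (x0 + sq n * z) * std_normal_density z) \<longlonglongrightarrow> h x0 * std_normal_density z"
        by (intro tendsto_intros)
    qed
    show "AE z in lborel. norm (h (x0 + sq n * z) * std_normal_density z) \<le> B * std_normal_density z" for n
      using hb by (auto simp: abs_mult intro!: mult_right_mono)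
  qed
  have "(LINT z|lborel. h x0 * std_normal_density z) = h x0" using std_normal_int(2) by simp
  with lim2 have lim2': "(\<lambda>n. A (sq n)) \<longlonglongrightarrow> of_real (2 * pi * h x0)"
    unfolding claim1[OF sqpos] by (intro tendsto_intros) simp
  from LIMSEQ_unique[OF lim1 lim2'] show ?thesis by (simp add: \<phi>_def)
qed



lemma one_plus_exp_pos[simp]: "1 + exp (x::real) > 0" "exp x + 1 > 0"
  by (simp_all add: add_pos_pos)

lemma one_plus_exp_ne0[simp]: "1 + exp (x::real) \<noteq> 0" "exp x + 1 \<noteq> 0"
  using one_plus_exp_pos[of x] by linarith+

lemma halfline_exp_real:
  fixes x :: real assumes x: "x > 0"
  shows "set_integrable lborel {..<0} (\<lambda>v. exp (x * v))"
proof -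
  have "set_integrable lborel (einterval (-\<infinity>) (ereal 0)) (\<lambda>v. exp (x * v))"
  proof (rule interval_integral_FTC_nonneg(1)[where F = "\<lambda>v. exp (x * v) / x" and A = 0 and B = "1 / x"])
    show "- \<infinity> < ereal 0" by simp
    show "((\<lambda>v. exp (x * v) / x) has_real_derivative exp (x * t)) (at t)" for t
      using x by (auto intro!: derivative_eq_intros)
    show "isCont (\<lambda>v. exp (x * v)) t" for t by simp
    show "AE t in lborel. - \<infinity> < ereal t \<longrightarrow> ereal t < ereal 0 \<longrightarrow> 0 \<le> exp (x * t)" by simp
    have "((\<lambda>v. exp (x * v) / x) \<longlongrightarrow> 0 / x) at_bot"
    proof (intro tendsto_intros)
      show "((\<lambda>v. exp (x * v)) \<longlongrightarrow> 0) at_bot"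
        using x by (auto intro!: exp_at_bot[THEN filterlim_compose] filterlim_tendsto_pos_mult_at_bot filterlim_ident)
      show "x \<noteq> 0" using x by simp
    qed
    then show "(((\<lambda>v. exp (x * v) / x) \<circ> real_of_ereal) \<longlongrightarrow> 0) (at_right (- \<infinity>))"
      unfolding ereal_tendsto_simps by simp
    have "((\<lambda>v. exp (x * v) / x) \<longlongrightarrow> exp (x * 0) / x) (at_left 0)"
      by (intro tendsto_intros) (use x in auto)
    then show "(((\<lambda>v. exp (x * v) / x) \<circ> real_of_ereal) \<longlongrightarrow> 1 / x) (at_left (ereal 0))"
      unfolding ereal_tendsto_simps by simp
  qed
  then show ?thesis by simp
qed

lemma halfline_exp:
  fixes w :: complex assumes w: "Re w > 0"
  shows "set_integrable lborel {..<0} (\<lambda>v. exp (w * of_real v))"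
    "(LBINT v:{..<0}. exp (w * of_real v)) = 1 / w"
proof -
  have w0: "w \<noteq> 0" using w by auto
  have ri: "set_integrable lborel {..<0} (\<lambda>v. exp (Re w * v))" by (rule halfline_exp_real[OF w])
  show si: "set_integrable lborel {..<0} (\<lambda>v. exp (w * of_real v))"
    unfolding set_integrable_def
  proof (rule Bochner_Integration.integrable_bound[OF ri[unfolded set_integrable_def]])
    show "(\<lambda>v. indicat_real {..<0} v *\<^sub>R exp (w * complex_of_real v)) \<in> borel_measurable lborel"
      by measurable
    show "AE v in lborel. norm (indicat_real {..<0} v *\<^sub>R exp (w * complex_of_real v)) \<le> norm (indicat_real {..<0} v *\<^sub>R exp (Re w * v))"
      by (auto simp: norm_exp_eq_Re indicator_def)
  qed
  have "(LBINT v=-\<infinity>..ereal 0. exp (w * of_real v)) = 1 / w - 0"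
  proof (rule interval_integral_FTC_integrable[where F = "\<lambda>v. exp (w * of_real v) / w"])
    show "- \<infinity> < ereal 0" by simp
    show "((\<lambda>v. exp (w * of_real v) / w) has_vector_derivative exp (w * of_real t)) (at t)" for t
    proof -
      have "((\<lambda>z. exp (w * z) / w) has_field_derivative exp (w * of_real t)) (at (of_real t))"
        using w0 by (auto intro!: derivative_eq_intros)
      then show ?thesis by (rule has_vector_derivative_real_field)
    qed
    show "isCont (\<lambda>v. exp (w * of_real v)) t" for t by (intro continuous_intros)
    show "set_integrable lborel (einterval (- \<infinity>) (ereal 0)) (\<lambda>v. exp (w * complex_of_real v))"
      using si by simp
    have "((\<lambda>v. exp (w * of_real v) / w) \<longlongrightarrow> 0) at_bot"
    proof (rule tendsto_norm_zero_cancel)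
      have "((\<lambda>v. exp (Re w * v) / norm w) \<longlongrightarrow> 0 / norm w) at_bot"
      proof (intro tendsto_intros)
        show "((\<lambda>v. exp (Re w * v)) \<longlongrightarrow> 0) at_bot"
          using w by (auto intro!: exp_at_bot[THEN filterlim_compose] filterlim_tendsto_pos_mult_at_bot filterlim_ident)
        show "norm w \<noteq> 0" using w0 by simp
      qed
      then show "((\<lambda>v. norm (exp (w * of_real v) / w)) \<longlongrightarrow> 0) at_bot"
        by (simp add: norm_divide norm_exp_eq_Re)
    qed
    then show "(((\<lambda>v. exp (w * of_real v) / w) \<circ> real_of_ereal) \<longlongrightarrow> 0) (at_right (- \<infinity>))"
      unfolding ereal_tendsto_simps by simp
    have "((\<lambda>v. exp (w * of_real v) / w) \<longlongrightarrow> exp (w * of_real 0) / w) (at_left 0)"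
      by (intro tendsto_intros) (use w0 in auto)
    then show "(((\<lambda>v. exp (w * of_real v) / w) \<circ> real_of_ereal) \<longlongrightarrow> 1 / w) (at_left (ereal 0))"
      unfolding ereal_tendsto_simps by simp
  qed
  then show "(LBINT v:{..<0}. exp (w * of_real v)) = 1 / w"
    by (simp add: interval_lebesgue_integral_le_eq)
qed

lemma halfline_log:
  fixes z :: real
  shows "set_integrable lborel {..<0} (\<lambda>v. 1 / (1 + exp (z - v)))"
    "(LBINT v:{..<0}. 1 / (1 + exp (z - v))) = ln (1 + exp (- z))"
proof -
  have F: "set_integrable lborel (einterval (-\<infinity>) (ereal 0)) (\<lambda>v. 1 / (1 + exp (z - v)))
     \<and> (LBINT v=-\<infinity>..ereal 0. 1 / (1 + exp (z - v))) = ln (1 + exp z) - z"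
  proof -
    let ?F = "\<lambda>v. ln (exp v + exp z)"
    have d: "(?F has_real_derivative 1 / (1 + exp (z - t))) (at t)" for t
    proof -
      have "(?F has_real_derivative exp t / (exp t + exp z)) (at t)"
        by (auto intro!: derivative_eq_intros simp: add_pos_pos)
      moreover have "exp t / (exp t + exp z) = 1 / (1 + exp (z - t))"
        by (simp add: exp_diff field_simps add_pos_pos)
      ultimately show ?thesis by simp
    qed
    have c: "isCont (\<lambda>v. 1 / (1 + exp (z - v))) t" for t
      by (intro continuous_intros) (metis add_pos_pos exp_gt_zero less_irrefl zero_less_one)
    have nn: "AE t in lborel. - \<infinity> < ereal t \<longrightarrow> ereal t < ereal 0 \<longrightarrow> 0 \<le> 1 / (1 + exp (z - t))"
      by (simp add: add_pos_pos less_imp_le)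
    have "(?F \<longlongrightarrow> ln (0 + exp z)) at_bot"
      by (intro tendsto_intros exp_at_bot) (simp)
    then have A: "((?F \<circ> real_of_ereal) \<longlongrightarrow> z) (at_right (- \<infinity>))"
      unfolding ereal_tendsto_simps by simp
    have "(?F \<longlongrightarrow> ln (exp 0 + exp z)) (at_left 0)"
      by (intro tendsto_intros) (simp add: add_pos_pos)
    then have B: "((?F \<circ> real_of_ereal) \<longlongrightarrow> ln (1 + exp z)) (at_left (ereal 0))"
      unfolding ereal_tendsto_simps by simp
    note ftc = interval_integral_FTC_nonneg[where F = ?F and a = "-\<infinity>" and b = "ereal 0", OF _ d c nn A B]
    show ?thesis using ftc by simp
  qed
  then show "set_integrable lborel {..<0} (\<lambda>v. 1 / (1 + exp (z - v)))" by simp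
  have "ln (1 + exp z) - z = ln (1 + exp (- z))"
  proof -
    have "ln (1 + exp z) - z = ln ((1 + exp z) / exp z)"
      by (simp add: ln_div add_pos_pos)
    also have "(1 + exp z) / exp z = 1 + exp (- z)"
      by (simp add: field_simps exp_minus)
    finally show ?thesis .
  qed
  then show "(LBINT v:{..<0}. 1 / (1 + exp (z - v))) = ln (1 + exp (- z))"
    using F by (simp add: interval_lebesgue_integral_le_eq)
qed



lemma Re_pos_not_nonpos_Ints: "Re z > 0 \<Longrightarrow> z \<notin> \<int>\<^sub>\<le>\<^sub>0"
  by (auto elim!: nonpos_Ints_cases)

definition Hc :: "real \<Rightarrow> real \<Rightarrow> real" where
  "Hc c u = exp ((1 + c) * u) * (1 + exp u) powr (- 1)"

definition Pf :: "complex \<Rightarrow> complex" where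
  "Pf s = Gamma (1 + s) * Gamma (- s)"

lemma exp_Complex_split: "exp (Complex a t * of_real u) = of_real (exp (a * u)) * iexp (t * u)"
proof -
  have "Complex a t * of_real u = of_real (a * u) + \<i> * of_real (t * u)"
    by (simp add: complex_eq_iff)
  then show ?thesis by (simp only: exp_add exp_of_real)
qed

lemma P_ft:
  assumes c: "-1 < c" "c < 0"
  shows "integrable lborel (\<lambda>u. of_real (Hc c u) * iexp (t * u))"
    "Pf (Complex c t) = (CLINT u|lborel. of_real (Hc c u) * iexp (t * u))"
proof -
  let ?z = "Complex (1 + c) t"
  have z: "Re ?z > 0" "Re ?z < 1" using c by auto
  have e: "exp (?z * of_real u) * of_real ((1 + exp u) powr (- 1)) = of_real (Hc c u) * iexp (t * u)" for u
    unfolding exp_Complex_split Hc_def of_real_mult by (simp only: mult_ac)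
  note B = Beta_log[OF z]
  show "integrable lborel (\<lambda>u. of_real (Hc c u) * iexp (t * u))" using B(1) unfolding e .
  have "1 + Complex c t = ?z" "- Complex c t = complex_of_real 1 - ?z"
    by (simp_all add: complex_eq_iff)
  then show "Pf (Complex c t) = (CLINT u|lborel. of_real (Hc c u) * iexp (t * u))"
    using B(2) unfolding e by (simp add: Pf_def)
qed

lemma Hc_props:
  assumes c: "-1 < c" "c < 0"
  shows "integrable lborel (Hc c)" "\<bar>Hc c u\<bar> \<le> 1" "isCont (Hc c) x" "Hc c u = exp ((1 + c) * u) / (1 + exp u)"
proof -
  show e: "Hc c u = exp ((1 + c) * u) / (1 + exp u)" for u
    by (simp add: Hc_def powr_minus_divide)
  have z: "Re (complex_of_real (1 + c)) > 0" "Re (complex_of_real (1 + c)) < 1" using c by auto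
  note B = Beta_log[OF z]
  have "Re (exp (complex_of_real (1 + c) * of_real u) * of_real ((1 + exp u) powr (- 1))) = Hc c u" for u
  proof -
    have "exp (complex_of_real (1 + c) * of_real u) = of_real (exp ((1 + c) * u))"
      by (metis exp_of_real of_real_mult)
    then show ?thesis by (simp add: Hc_def)
  qed
  then show "integrable lborel (Hc c)" using integrable_Re[OF B(1)] by simp
  show "\<bar>Hc c u\<bar> \<le> 1"
  proof (cases "u \<ge> 0")
    case True
    have "(1 + c) * u \<le> 1 * u" by (rule mult_right_mono) (use True c in auto)
    then have "exp ((1 + c) * u) \<le> exp u" by simp
    also have "\<dots> \<le> 1 + exp u" by simp
    finally show ?thesis unfolding e by simp
  next
    case False
    have "(1 + c) * u < 0" by (rule mult_pos_neg) (use False c in auto)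
    then have "exp ((1 + c) * u) \<le> exp 0" by simp
    also have "\<dots> \<le> 1 + exp u" by simp
    finally show ?thesis unfolding e by simp
  qed
  show "isCont (Hc c) x" unfolding e[abs_def] by (intro continuous_intros) simp
qed

lemma cosh_lower: "(exp (y::real) + exp (- y)) / 2 \<ge> (1 + y\<^sup>2) / 4"
proof -
  have "exp \<bar>y\<bar> \<ge> 1 + \<bar>y\<bar> + \<bar>y\<bar>\<^sup>2 / 2" by (rule exp_lower_Taylor_quadratic) simp
  moreover have "exp y + exp (- y) \<ge> exp \<bar>y\<bar>" by (cases "y \<ge> 0") (auto simp: add_increasing add_increasing2)
  ultimately show ?thesis by (simp add: power2_abs)
qed

lemma P_bound:
  assumes c: "-1 < c" "c < 0"
  shows "norm (Pf (Complex c t)) \<le> 4 * pi / \<bar>sin (pi * c)\<bar> * inverse (1 + t\<^sup>2)"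
proof -
  let ?s = "Complex c t"
  let ?w = "of_real pi * (- ?s)"
  have refl: "Pf ?s = of_real pi / sin ?w"
    using Gamma_reflection_complex[of "- ?s"] by (simp add: Pf_def mult.commute)
  have sc: "sin (pi * c) < 0"
  proof -
    have a: "0 < - (pi * c)" using c by (simp add: mult_pos_neg)
    have "0 < pi * (1 + c)" using c by simp
    then have b: "- (pi * c) < pi" by (simp add: algebra_simps)
    have "sin (- (pi * c)) > 0" by (rule sin_gt_zero[OF a b])
    then show ?thesis by simp
  qed
  have "norm (sin ?w) \<ge> \<bar>Re (sin ?w)\<bar>" by (rule abs_Re_le_cmod)
  also have "\<bar>Re (sin ?w)\<bar> = \<bar>sin (pi * c)\<bar> * ((exp (pi * t) + exp (- (pi * t))) / 2)"
    by (simp add: Re_sin abs_mult add.commute)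
  finally have ge: "norm (sin ?w) \<ge> \<bar>sin (pi * c)\<bar> * ((exp (pi * t) + exp (- (pi * t))) / 2)" .
  have "(exp (pi * t) + exp (- (pi * t))) / 2 \<ge> (1 + (pi * t)\<^sup>2) / 4" by (rule cosh_lower)
  moreover have "(1 + (pi * t)\<^sup>2) \<ge> 1 + t\<^sup>2"
  proof -
    have p1: "1 \<le> pi" using pi_gt3 by simp
    have "1 * 1 \<le> pi * pi" by (rule mult_mono) (use p1 in auto)
    then have "pi\<^sup>2 \<ge> 1" by (simp add: power2_eq_square)
    then have "pi\<^sup>2 * t\<^sup>2 \<ge> 1 * t\<^sup>2" by (intro mult_right_mono) auto
    then show ?thesis by (simp add: power_mult_distrib)
  qed
  ultimately have "(exp (pi * t) + exp (- (pi * t))) / 2 \<ge> (1 + t\<^sup>2) / 4"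
    by (meson divide_right_mono order_trans zero_le_numeral)
  then have ge2: "norm (sin ?w) \<ge> \<bar>sin (pi * c)\<bar> * ((1 + t\<^sup>2) / 4)"
    using ge by (meson abs_ge_zero mult_left_mono order_trans)
  have pos: "\<bar>sin (pi * c)\<bar> * ((1 + t\<^sup>2) / 4) > 0"
    using sc by (intro mult_pos_pos) (auto simp: add_pos_nonneg)
  have "norm (Pf ?s) = pi / norm (sin ?w)" by (simp add: refl norm_divide)
  also have "\<dots> \<le> pi / (\<bar>sin (pi * c)\<bar> * ((1 + t\<^sup>2) / 4))"
  proof (rule divide_left_mono[OF ge2])
    have np: "norm (sin ?w) > 0" using ge2 pos by linarith
    show "0 < norm (sin ?w) * (\<bar>sin (pi * c)\<bar> * ((1 + t\<^sup>2) / 4))"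
      by (rule mult_pos_pos[OF np pos])
  qed simp
  also have "\<dots> = 4 * pi / \<bar>sin (pi * c)\<bar> * inverse (1 + t\<^sup>2)"
    by (simp add: field_simps)
  finally show ?thesis .
qed

lemma P_cont:
  assumes c: "-1 < c" "c < 0"
  shows "continuous_on UNIV (\<lambda>t. Pf (Complex c t))"
proof (rule continuous_at_imp_continuous_on, intro ballI)
  fix t :: real
  have Cc: "isCont (Complex c) t"
  proof -
    have "Complex c = (\<lambda>t. of_real c + \<i> * of_real t)" by (auto simp: complex_eq_iff)
    then show ?thesis by (simp add: continuous_intros)
  qed
  have n1: "1 + Complex c t \<notin> \<int>\<^sub>\<le>\<^sub>0" by (rule Re_pos_not_nonpos_Ints) (use c in simp)
  have n2: "- Complex c t \<notin> \<int>\<^sub>\<le>\<^sub>0" by (rule Re_pos_not_nonpos_Ints) (use c in simp)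
  have "isCont (\<lambda>t. 1 + Complex c t) t" by (intro continuous_intros Cc)
  then have "isCont (\<lambda>t. Gamma (1 + Complex c t)) t" using n1 by (rule isCont_Gamma)
  moreover have "isCont (\<lambda>t. - Complex c t) t" by (intro continuous_intros Cc)
  then have "isCont (\<lambda>t. Gamma (- Complex c t)) t" using n2 by (rule isCont_Gamma)
  ultimately show "isCont (\<lambda>t. Pf (Complex c t)) t" unfolding Pf_def by (rule isCont_mult)
qed

lemma P_int:
  assumes c: "-1 < c" "c < 0"
  shows "integrable lborel (\<lambda>t. Pf (Complex c t))"
proof -
  have i: "integrable lborel (\<lambda>t::real. inverse (1 + t\<^sup>2))"
    using integrable_inverse_1_plus_square unfolding set_integrable_def einterval_eq_UNIV by simp
  have i2: "integrable lborel (\<lambda>t. 4 * pi / \<bar>sin (pi * c)\<bar> * inverse (1 + t\<^sup>2))"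
    using i by simp
  show ?thesis
  proof (rule Bochner_Integration.integrable_bound[OF i2])
    show "(\<lambda>t. Pf (Complex c t)) \<in> borel_measurable lborel"
      using borel_measurable_continuous_onI[OF P_cont[OF c]] by simp
    show "AE t in lborel. norm (Pf (Complex c t)) \<le> norm (4 * pi / \<bar>sin (pi * c)\<bar> * inverse (1 + t\<^sup>2))"
    proof (rule AE_I2)
      fix t
      have "norm (Pf (Complex c t)) \<le> 4 * pi / \<bar>sin (pi * c)\<bar> * inverse (1 + t\<^sup>2)" by (rule P_bound[OF c])
      also have "\<dots> \<le> norm (4 * pi / \<bar>sin (pi * c)\<bar> * inverse (1 + t\<^sup>2))" by simp
      finally show "norm (Pf (Complex c t)) \<le> norm (4 * pi / \<bar>sin (pi * c)\<bar> * inverse (1 + t\<^sup>2))" .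
    qed
  qed
qed

lemma P_inv:
  assumes c: "-1 < c" "c < 0"
  shows "(CLINT t|lborel. Pf (Complex c t) * exp (Complex c t * of_real \<xi>)) = of_real (2 * pi / (1 + exp \<xi>))"
proof -
  note H = Hc_props[OF c]
  have ph: "(\<lambda>t. CLINT u|lborel. of_real (Hc c u) * iexp (t * u)) = (\<lambda>t. Pf (Complex c t))"
    using P_ft(2)[OF c] by simp
  have FI: "(CLINT t|lborel. (CLINT u|lborel. of_real (Hc c u) * iexp (t * u)) * iexp (- (t * (- \<xi>))))
         = of_real (2 * pi * Hc c (- \<xi>))"
    by (rule fourier_inversion[OF H(1) H(2) H(3)]) (unfold ph, rule P_int[OF c])
  have e: "Pf (Complex c t) * exp (Complex c t * of_real \<xi>) = of_real (exp (c * \<xi>)) * ((CLINT u|lborel. of_real (Hc c u) * iexp (t * u)) * iexp (- (t * (- \<xi>))))" for t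
    by (simp add: exp_Complex_split P_ft(2)[OF c])
  have eq1: "(CLINT t|lborel. Pf (Complex c t) * exp (Complex c t * of_real \<xi>)) = of_real (exp (c * \<xi>)) * of_real (2 * pi * Hc c (- \<xi>))"
    unfolding e integral_mult_right_zero FI ..
  have eq2: "exp (c * \<xi>) * (2 * pi * Hc c (- \<xi>)) = 2 * pi / (1 + exp \<xi>)"
  proof -
    have "exp (c * \<xi>) * exp ((1 + c) * - \<xi>) = exp (- \<xi>)" by (simp add: exp_add[symmetric] algebra_simps)
    moreover have "exp (- \<xi>) / (1 + exp (- \<xi>)) = 1 / (1 + exp \<xi>)"
      by (simp add: exp_minus field_simps)
    ultimately show ?thesis unfolding H(4) by (simp add: field_simps)
  qed
  show ?thesis using eq1 eq2 by (metis of_real_mult)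
qed



lemma kernel_eq:
  fixes kZ kW :: real and s :: complex
  assumes s1: "Re s < 0" "Re s > -1"
  shows "meijerG_kernel 3 2 [0, 1 - kW, 1] [0, 0, kZ] s
      = Pf s * (1 / (- s)) * (Gamma (of_real kW + s) * Gamma (of_real kZ - s))"
proof -
  have ns: "- s \<notin> \<int>\<^sub>\<le>\<^sub>0" by (rule Re_pos_not_nonpos_Ints) (use s1 in simp)
  have s0: "s \<noteq> 0" using s1 by auto
  have r: "rGamma (1 - s) = rGamma (- s) / (- s)"
  proof -
    have "- s * rGamma (- s + 1) = rGamma (- s)" by (rule rGamma_plus1)
    then have "- s * rGamma (1 - s) = rGamma (- s)" by (simp add: add.commute)
    moreover have "- s \<noteq> 0" using s0 by simp
    ultimately show ?thesis by (metis nonzero_mult_div_cancel_left)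
  qed
  have g: "Gamma (- s) * rGamma (- s) = 1"
    using ns by (simp add: Gamma_def rGamma_eq_zero_iff)
  have k: "meijerG_kernel 3 2 [0, 1 - kW, 1] [0, 0, kZ] s =
      Gamma (- s) * Gamma (- s) * Gamma (of_real kZ - s) * (Gamma (1 + s) * Gamma (of_real kW + s)) * rGamma (1 - s)"
    by (simp add: meijerG_kernel_def numeral_3_eq_3 numeral_2_eq_2 lessThan_Suc atLeastLessThanSuc algebra_simps)
  show ?thesis unfolding k r Pf_def using g s0
    by (simp add: field_simps)
qed



lemma fubini_bound:
  fixes F :: "real \<Rightarrow> real \<Rightarrow> complex" and f g :: "real \<Rightarrow> real"
  assumes Fm: "case_prod F \<in> borel_measurable (lborel \<Otimes>\<^sub>M lborel)"
    and b: "\<And>x y. norm (F x y) \<le> f x * g y"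
    and f: "integrable lborel f" and g: "integrable lborel g"
  shows "integrable (lborel \<Otimes>\<^sub>M lborel) (case_prod F)"
    "(LINT x|lborel. LINT y|lborel. F x y) = (LINT y|lborel. LINT x|lborel. F x y)"
proof -
  have fm[measurable]: "f \<in> borel_measurable borel" using borel_measurable_integrable[OF f] by simp
  have gm[measurable]: "g \<in> borel_measurable borel" using borel_measurable_integrable[OF g] by simp
  have pm: "(\<lambda>(x, y). norm (f x) * norm (g y)) \<in> borel_measurable (lborel \<Otimes>\<^sub>M lborel)" by measurable
  have pint: "integrable (lborel \<Otimes>\<^sub>M lborel) (\<lambda>(x, y). norm (f x) * norm (g y))"
  proof (rule lborel_pair.Fubini_integrable[OF pm])
    have "(\<lambda>x. LINT y|lborel. norm (case (x, y) of (x, y) \<Rightarrow> norm (f x) * norm (g y))) =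
          (\<lambda>x. norm (f x) * (LINT y|lborel. norm (g y)))" by simp
    moreover have "integrable lborel (\<lambda>x. norm (f x) * (LINT y|lborel. norm (g y)))"
      using f by (intro Bochner_Integration.integrable_mult_left) simp
    ultimately show "integrable lborel (\<lambda>x. LINT y|lborel. norm (case (x, y) of (x, y) \<Rightarrow> norm (f x) * norm (g y)))"
      by simp
    show "AE x in lborel. integrable lborel (\<lambda>y. case (x, y) of (x, y) \<Rightarrow> norm (f x) * norm (g y))"
      using g by (intro AE_I2) simp
  qed
  show Fint: "integrable (lborel \<Otimes>\<^sub>M lborel) (case_prod F)"
  proof (rule Bochner_Integration.integrable_bound[OF pint Fm])
    show "AE xy in lborel \<Otimes>\<^sub>M lborel. norm (case_prod F xy) \<le> norm ((\<lambda>(x, y). norm (f x) * norm (g y)) xy)"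
    proof (rule AE_I2)
      fix xy :: "real \<times> real"
      obtain x y where xy: "xy = (x, y)" by (cases xy)
      have "norm (F x y) \<le> f x * g y" by (rule b)
      also have "\<dots> \<le> norm (f x) * norm (g y)" by (simp add: abs_mult[symmetric])
      finally show "norm (case_prod F xy) \<le> norm ((\<lambda>(x, y). norm (f x) * norm (g y)) xy)"
        by (simp add: xy)
    qed
  qed
  show "(LINT x|lborel. LINT y|lborel. F x y) = (LINT y|lborel. LINT x|lborel. F x y)"
    by (rule lborel_pair.Fubini_integral[OF Fint, symmetric])
qed



lemma Complex_measurable[measurable]: "(\<lambda>t. Complex c t) \<in> borel_measurable borel"
proof -
  have "(\<lambda>t. Complex c t) = (\<lambda>t. of_real c + \<i> * of_real t)" by (auto simp: complex_eq_iff)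
  then show ?thesis by (simp add: borel_measurable_continuous_onI continuous_intros)
qed

lemma norm_exp_Complex: "norm (exp (Complex c t * of_real x)) = exp (c * x)"
  by (simp add: norm_exp_eq_Re)

lemma Q_eq:
  assumes c: "-1 < c" "c < 0"
  shows "(CLINT t|lborel. Pf (Complex c t) * (1 / (- Complex c t)) * exp (Complex c t * of_real \<zeta>))
       = of_real (2 * pi * ln (1 + exp (- \<zeta>)))"
proof -
  have Pm[measurable]: "(\<lambda>t. Pf (Complex c t)) \<in> borel_measurable borel"
    using borel_measurable_continuous_onI[OF P_cont[OF c]] by simp
  define F where "F t v = Pf (Complex c t) * (indicator {..<0} v *\<^sub>R exp (Complex c t * of_real (\<zeta> - v)))" for t v
  have Fm: "case_prod F \<in> borel_measurable (lborel \<Otimes>\<^sub>M lborel)" unfolding F_def by measurable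
  have hl: "1 / (- Complex c t) = (CLINT v|lborel. indicator {..<0} v *\<^sub>R exp ((- Complex c t) * of_real v))" for t
  proof -
    have "Re (- Complex c t) > 0" using c by simp
    from halfline_exp(2)[OF this] show ?thesis by (simp add: set_lebesgue_integral_def)
  qed
  have inner: "Pf (Complex c t) * (1 / (- Complex c t)) * exp (Complex c t * of_real \<zeta>) = (CLINT v|lborel. F t v)" for t
  proof -
    have e: "Pf (Complex c t) * (indicator {..<0} v *\<^sub>R exp ((- Complex c t) * of_real v)) * exp (Complex c t * of_real \<zeta>) = F t v" for v
    proof -
      have "exp ((- Complex c t) * of_real v) * exp (Complex c t * of_real \<zeta>) = exp (Complex c t * of_real (\<zeta> - v))"
        by (simp add: exp_add[symmetric] algebra_simps)
      then show ?thesis unfolding F_def by (simp add: mult_ac)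
    qed
    show ?thesis unfolding hl
      by (simp only: integral_mult_right_zero[symmetric] integral_mult_left_zero[symmetric] e)
  qed
  have b: "norm (F t v) \<le> (norm (Pf (Complex c t)) * exp (c * \<zeta>)) * (indicator {..<0} v * exp (- c * v))" for t v
  proof -
    have "norm (F t v) = norm (Pf (Complex c t)) * (indicator {..<0} v * exp (c * (\<zeta> - v)))"
      unfolding F_def by (simp add: norm_mult norm_exp_Complex indicator_def)
    also have "exp (c * (\<zeta> - v)) = exp (c * \<zeta>) * exp (- c * v)" by (simp add: exp_add[symmetric] algebra_simps)
    finally show ?thesis by (simp add: mult_ac)
  qed
  have fi: "integrable lborel (\<lambda>t. norm (Pf (Complex c t)) * exp (c * \<zeta>))"
    using P_int[OF c] by (intro Bochner_Integration.integrable_mult_left integrable_norm)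
  have gi: "integrable lborel (\<lambda>v. indicator {..<0} v * exp (- c * v))"
    using halfline_exp_real[of "- c"] c by (simp add: set_integrable_def)
  note FB = fubini_bound[OF Fm b fi gi]
  have "(CLINT t|lborel. Pf (Complex c t) * (1 / (- Complex c t)) * exp (Complex c t * of_real \<zeta>))
      = (CLINT t|lborel. CLINT v|lborel. F t v)" by (simp only: inner)
  also have "\<dots> = (CLINT v|lborel. CLINT t|lborel. F t v)" by (rule FB(2))
  also have "\<dots> = (CLINT v|lborel. of_real (2 * pi * (indicator {..<0} v * (1 / (1 + exp (\<zeta> - v))))))"
  proof (rule Bochner_Integration.integral_cong[OF refl])
    fix v
    have "(CLINT t|lborel. F t v) = indicator {..<0} v *\<^sub>R (CLINT t|lborel. Pf (Complex c t) * exp (Complex c t * of_real (\<zeta> - v)))"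
      unfolding F_def by (simp add: mult.commute[of "Pf _"] mult.left_commute[of "Pf _"])
    also have "\<dots> = indicator {..<0} v *\<^sub>R of_real (2 * pi / (1 + exp (\<zeta> - v)))"
      by (simp only: P_inv[OF c])
    finally show "(CLINT t|lborel. F t v) = of_real (2 * pi * (indicator {..<0} v * (1 / (1 + exp (\<zeta> - v)))))"
      by (simp add: scaleR_conv_of_real indicator_def)
  qed
  also have "\<dots> = of_real (2 * pi * (LINT v|lborel. indicator {..<0} v * (1 / (1 + exp (\<zeta> - v)))))"
    by (simp only: integral_complex_of_real integral_mult_right_zero)
  also have "(LINT v|lborel. indicator {..<0} v * (1 / (1 + exp (\<zeta> - v)))) = ln (1 + exp (- \<zeta>))"
    using halfline_log(2)[of \<zeta>] by (simp add: set_lebesgue_integral_def)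
  finally show ?thesis .
qed



lemma refl_weight:
  fixes kZ kW z :: real
  shows "exp (kW * (- z)) * (1 + exp (- z)) powr (- (kZ + kW)) = exp (kZ * z) * (1 + exp z) powr (- (kZ + kW))"
proof -
  have "1 + exp (- z) = exp (- z) * (1 + exp z)" by (simp add: exp_minus field_simps)
  then have "(1 + exp (- z)) powr (- (kZ + kW)) = exp (- z) powr (- (kZ + kW)) * (1 + exp z) powr (- (kZ + kW))"
    by (simp add: powr_mult add_pos_pos)
  also have "exp (- z) powr (- (kZ + kW)) = exp ((kZ + kW) * z)" by (simp add: powr_def algebra_simps)
  finally have "(1 + exp (- z)) powr (- (kZ + kW)) = exp ((kZ + kW) * z) * (1 + exp z) powr (- (kZ + kW))" .
  moreover have "exp (kW * (- z)) * exp ((kZ + kW) * z) = exp (kZ * z)" by (simp add: exp_add[symmetric] algebra_simps)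
  ultimately show ?thesis by (metis mult.assoc)
qed

lemma main_MB:
  fixes kZ kW a c :: real
  assumes kZ: "kZ > 0" and kW: "kW > 0" and a: "a > 0" and c: "-1 < c" "-kW < c" "c < 0"
  shows "integrable lborel (\<lambda>z. exp (kZ * z) * (1 + exp z) powr (- (kZ + kW)) * ln (1 + exp (z - ln a)))"
    "(CLINT t|lborel. meijerG_kernel 3 2 [0, 1 - kW, 1] [0, 0, kZ] (Complex c t) * (of_real a) powr (Complex c t))
      = of_real (2 * pi * Gamma (kZ + kW) * (LINT z|lborel. exp (kZ * z) * (1 + exp z) powr (- (kZ + kW)) * ln (1 + exp (z - ln a))))"
proof -
  define L where "L = ln a"
  define k where "k = kZ + kW"
  define w where "w z = exp (kW * z) * (1 + exp z) powr (- k)" for z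
  have cc: "-1 < c" "c < 0" using c by auto
  have Pm[measurable]: "(\<lambda>t. Pf (Complex c t)) \<in> borel_measurable borel"
    using borel_measurable_continuous_onI[OF P_cont[OF cc]] by simp
  have Gk: "Gamma k \<noteq> 0" using kZ kW by (simp add: k_def Gamma_real_pos less_imp_neq[symmetric])
  have Bz: "Gamma (of_real kW + Complex c t) * Gamma (of_real kZ - Complex c t)
      = of_real (Gamma k) * (CLINT z|lborel. exp ((of_real kW + Complex c t) * of_real z) * of_real ((1 + exp z) powr (- k)))" for t
  proof -
    have r: "Re (of_real kW + Complex c t) > 0" "Re (of_real kW + Complex c t) < k"
      using c kZ by (auto simp: k_def)
    have eqk: "of_real k - (of_real kW + Complex c t) = of_real kZ - Complex c t"
      by (simp add: k_def complex_eq_iff)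
    have X: "(CLINT z|lborel. exp ((of_real kW + Complex c t) * of_real z) * of_real ((1 + exp z) powr (- k)))
       = Gamma (of_real kW + Complex c t) * Gamma (of_real kZ - Complex c t) / of_real (Gamma k)"
      using Beta_log(2)[OF r] unfolding eqk .
    show ?thesis unfolding X using Gk by simp
  qed
  define F1 where "F1 t z = of_real (w z) * (Pf (Complex c t) * (1 / (- Complex c t)) * exp (Complex c t * of_real (z + L)))" for t z
  have F1m: "case_prod F1 \<in> borel_measurable (lborel \<Otimes>\<^sub>M lborel)" unfolding F1_def w_def by measurable
  have kern: "meijerG_kernel 3 2 [0, 1 - kW, 1] [0, 0, kZ] (Complex c t) * (of_real a) powr (Complex c t)
      = of_real (Gamma k) * (CLINT z|lborel. F1 t z)" for t
  proof -
    have pw: "(of_real a) powr (Complex c t) = exp (Complex c t * of_real L)"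
      using a by (simp add: powr_def Ln_of_real L_def)
    have e: "exp ((of_real kW + Complex c t) * of_real z) * of_real ((1 + exp z) powr (- k)) * (Pf (Complex c t) * (1 / (- Complex c t)) * exp (Complex c t * of_real L)) = F1 t z" for z
    proof -
      have "exp ((of_real kW + Complex c t) * of_real z) * exp (Complex c t * of_real L) = of_real (exp (kW * z)) * exp (Complex c t * of_real (z + L))"
        by (simp add: exp_add[symmetric] algebra_simps flip: exp_of_real)
      then show ?thesis unfolding F1_def w_def by (simp add: mult_ac)
    qed
    have "meijerG_kernel 3 2 [0, 1 - kW, 1] [0, 0, kZ] (Complex c t) * (of_real a) powr (Complex c t)
        = (Pf (Complex c t) * (1 / (- Complex c t)) * exp (Complex c t * of_real L)) * (Gamma (of_real kW + Complex c t) * Gamma (of_real kZ - Complex c t))"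
      unfolding pw by (subst kernel_eq) (use c in \<open>auto simp: mult_ac\<close>)
    also have "\<dots> = of_real (Gamma k) * (CLINT z|lborel. exp ((of_real kW + Complex c t) * of_real z) * of_real ((1 + exp z) powr (- k)) * (Pf (Complex c t) * (1 / (- Complex c t)) * exp (Complex c t * of_real L)))"
      unfolding Bz integral_mult_left_zero by (simp only: mult_ac)
    also have "\<dots> = of_real (Gamma k) * (CLINT z|lborel. F1 t z)" unfolding e ..
    finally show ?thesis .
  qed
  have b: "norm (F1 t z) \<le> (norm (Pf (Complex c t)) * (- 1 / c) * exp (c * L)) * (w z * exp (c * z))" for t z
  proof -
    have wp: "w z \<ge> 0" by (simp add: w_def)
    have n: "norm (1 / (- Complex c t)) \<le> - 1 / c"
    proof -
      have "\<bar>Re (Complex c t)\<bar> \<le> norm (Complex c t)" by (rule abs_Re_le_cmod)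
      then have "- c \<le> norm (Complex c t)" using c by simp
      then show ?thesis using c by (simp add: norm_divide divide_simps)
    qed
    have "norm (F1 t z) = w z * (norm (Pf (Complex c t)) * norm (1 / (- Complex c t)) * exp (c * (z + L)))"
      unfolding F1_def norm_mult norm_of_real norm_exp_Complex using wp by (simp only: abs_of_nonneg)
    also have "\<dots> \<le> w z * (norm (Pf (Complex c t)) * (- 1 / c) * exp (c * (z + L)))"
      using n wp by (intro mult_left_mono mult_right_mono) auto
    also have "exp (c * (z + L)) = exp (c * L) * exp (c * z)" by (simp add: exp_add[symmetric] algebra_simps)
    finally show ?thesis by (simp add: mult_ac)
  qed
  have fi: "integrable lborel (\<lambda>t. norm (Pf (Complex c t)) * (- 1 / c) * exp (c * L))"
    using P_int[OF cc] by (intro Bochner_Integration.integrable_mult_left integrable_norm)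
  have gi: "integrable lborel (\<lambda>z. w z * exp (c * z))"
  proof -
    have r: "Re (complex_of_real (kW + c)) > 0" "Re (complex_of_real (kW + c)) < k"
      using c kZ by (auto simp: k_def)
    have "Re (exp (complex_of_real (kW + c) * of_real z) * of_real ((1 + exp z) powr (- k))) = w z * exp (c * z)" for z
    proof -
      have "exp (complex_of_real (kW + c) * of_real z) = of_real (exp ((kW + c) * z))"
        by (metis exp_of_real of_real_mult)
      then show ?thesis by (simp add: w_def exp_add[symmetric] algebra_simps)
    qed
    then show ?thesis using integrable_Re[OF Beta_log(1)[OF r]] by simp
  qed
  note FB = fubini_bound[OF F1m b fi gi]
  have inner: "(CLINT t|lborel. F1 t z) = of_real (2 * pi * (w z * ln (1 + exp (- (z + L)))))" for z
  proof -
    have "(CLINT t|lborel. F1 t z) = of_real (w z) * (CLINT t|lborel. Pf (Complex c t) * (1 / (- Complex c t)) * exp (Complex c t * of_real (z + L)))"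
      unfolding F1_def by (rule integral_mult_right_zero)
    also have "\<dots> = of_real (w z) * of_real (2 * pi * ln (1 + exp (- (z + L))))"
      by (simp only: Q_eq[OF cc])
    finally show ?thesis by (simp add: mult_ac)
  qed
  have intz: "integrable lborel (\<lambda>z. w z * ln (1 + exp (- (z + L))))"
  proof -
    have "integrable lborel (\<lambda>z. CLINT t|lborel. F1 t z)" by (rule lborel_pair.integrable_snd[OF FB(1)])
    then have "integrable lborel (\<lambda>z. Re (of_real (2 * pi * (w z * ln (1 + exp (- (z + L)))))) / (2 * pi))"
      unfolding inner by (intro integrable_divide integrable_Re)
    then show ?thesis by simp
  qed
  define G where "G z = w z * ln (1 + exp (- (z + L)))" for z
  have Grefl: "G (0 + (-1) * z) = exp (kZ * z) * (1 + exp z) powr (- (kZ + kW)) * ln (1 + exp (z - ln a))" for z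
  proof -
    have "w (- z) = exp (kZ * z) * (1 + exp z) powr (- (kZ + kW))"
      unfolding w_def k_def by (rule refl_weight)
    then show ?thesis by (simp add: G_def L_def)
  qed
  show "integrable lborel (\<lambda>z. exp (kZ * z) * (1 + exp z) powr (- (kZ + kW)) * ln (1 + exp (z - ln a)))"
    using lborel_integrable_real_affine[of G "-1" 0] intz unfolding Grefl by (simp add: G_def[abs_def])
  have GI: "(LINT z|lborel. G z) = (LINT z|lborel. exp (kZ * z) * (1 + exp z) powr (- (kZ + kW)) * ln (1 + exp (z - ln a)))"
    using lborel_integral_real_affine[of "-1" G 0] unfolding Grefl by simp
  have "(CLINT t|lborel. meijerG_kernel 3 2 [0, 1 - kW, 1] [0, 0, kZ] (Complex c t) * (of_real a) powr (Complex c t))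
      = of_real (Gamma k) * (CLINT t|lborel. CLINT z|lborel. F1 t z)"
    by (simp only: kern integral_mult_right_zero)
  also have "(CLINT t|lborel. CLINT z|lborel. F1 t z) = (CLINT z|lborel. CLINT t|lborel. F1 t z)" by (rule FB(2))
  also have "\<dots> = of_real (2 * pi * (LINT z|lborel. G z))"
    by (simp only: inner integral_complex_of_real integral_mult_right_zero G_def)
  finally show "(CLINT t|lborel. meijerG_kernel 3 2 [0, 1 - kW, 1] [0, 0, kZ] (Complex c t) * (of_real a) powr (Complex c t))
      = of_real (2 * pi * Gamma (kZ + kW) * (LINT z|lborel. exp (kZ * z) * (1 + exp z) powr (- (kZ + kW)) * ln (1 + exp (z - ln a))))"
    unfolding GI by (simp add: k_def mult_ac)
qed



lemma all_less_3: "(\<forall>j<(3::nat). P j) \<longleftrightarrow> P 0 \<and> P 1 \<and> P 2"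
  by (auto simp: numeral_3_eq_3 numeral_2_eq_2 less_Suc_eq)

lemma all_less_2: "(\<forall>j<(2::nat). P j) \<longleftrightarrow> P 0 \<and> P 1"
  by (auto simp: numeral_2_eq_2 less_Suc_eq)

lemma ergodic_eq:
  fixes \<rho> \<zeta> kZ \<theta>Z kW \<theta>W :: real
  assumes "\<rho> > 0" and "\<zeta> > 0" and kZ: "kZ > 0" and "\<theta>Z > 0" and kW: "kW > 0" and "\<theta>W > 0"
  defines "a \<equiv> \<theta>W / (\<rho> * \<zeta> * \<theta>Z)"
  shows "ergodic_rate_c \<rho> \<zeta> kZ \<theta>Z kW \<theta>W
     = (LINT z|lborel. exp (kZ * z) * (1 + exp z) powr (- (kZ + kW)) * ln (1 + exp (z - ln a))) / (Beta kZ kW * ln 2)"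
proof -
  have a: "a > 0" using assms by (simp add: a_def)
  define L where "L = ln a"
  define Gz where "Gz z = exp (kZ * z) * (1 + exp z) powr (- (kZ + kW)) * ln (1 + exp (z - ln a))" for z
  define f where "f x = log 2 (1 + x) * gamma_c_pdf \<rho> \<zeta> kZ \<theta>Z kW \<theta>W x" for x
  have fm: "f \<in> borel_measurable borel" unfolding f_def gamma_c_pdf_def by measurable
  have eu: "exp u * f (exp u) = Gz (L + 1 * u) / (Beta kZ kW * ln 2)" for u
  proof -
    define y where "y = exp (L + u)"
    have y: "y > 0" by (simp add: y_def)
    have xy: "exp u * \<theta>W / (\<rho> * \<zeta> * \<theta>Z) = y"
      using a by (simp add: y_def L_def exp_add a_def)
    have pdf: "gamma_c_pdf \<rho> \<zeta> kZ \<theta>Z kW \<theta>W (exp u) = a / Beta kZ kW * y powr (kZ - 1) * (1 + y) powr (- (kZ + kW))"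
      unfolding gamma_c_pdf_def xy by (simp add: a_def)
    have yy: "exp u * a * y powr (kZ - 1) = exp (kZ * (L + u))"
    proof -
      have "exp u * a = y" using a by (simp add: y_def L_def exp_add)
      moreover have "y * y powr (kZ - 1) = y powr kZ"
      proof -
        have "y powr 1 * y powr (kZ - 1) = y powr (1 + (kZ - 1))" by (rule powr_add[symmetric])
        then show ?thesis using y by simp
      qed
      moreover have "y powr kZ = exp (kZ * (L + u))" by (simp add: y_def powr_def)
      ultimately show ?thesis by simp
    qed
    have "exp u * f (exp u) = (exp u * a * y powr (kZ - 1)) * (1 + y) powr (- (kZ + kW)) * ln (1 + exp u) / (Beta kZ kW * ln 2)"
      unfolding f_def pdf by (simp add: log_def field_simps)
    also have "\<dots> = Gz (L + 1 * u) / (Beta kZ kW * ln 2)"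
      unfolding yy by (simp add: Gz_def y_def L_def)
    finally show ?thesis .
  qed
  have c: "-1 < - min 1 kW / 2" "- kW < - min 1 kW / 2" "- min 1 kW / 2 < 0" using kW by auto
  note M = main_MB[OF kZ kW a c]
  have Gint: "integrable lborel Gz" using M(1) by (simp add: Gz_def[abs_def])
  have i2: "integrable lborel (\<lambda>u. exp u * f (exp u))"
    unfolding eu using lborel_integrable_real_affine[OF Gint, of 1 L] by simp
  have si: "set_integrable lborel {0<..} f" using subst_exp_real(1)[OF fm] i2 by simp
  have "ergodic_rate_c \<rho> \<zeta> kZ \<theta>Z kW \<theta>W = (LBINT x:{0<..}. f x)"
    by (simp add: ergodic_rate_c_def f_def)
  also have "\<dots> = (LINT u|lborel. exp u * f (exp u))" using subst_exp_real(2)[OF fm si] by simp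
  also have "\<dots> = (LINT u|lborel. Gz (L + 1 * u)) / (Beta kZ kW * ln 2)" unfolding eu by simp
  also have "(LINT u|lborel. Gz (L + 1 * u)) = (LINT z|lborel. Gz z)"
    using lborel_integral_real_affine[of 1 Gz L] by simp
  finally show ?thesis by (simp add: Gz_def)
qed

theorem theorem2:
  fixes \<rho> \<zeta> kZ \<theta>Z kW \<theta>W :: real
  assumes "\<rho> > 0" and "\<zeta> > 0"
    and "kZ > 0" and "\<theta>Z > 0" and "kW > 0" and "\<theta>W > 0"
  shows "complex_of_real (ergodic_rate_c \<rho> \<zeta> kZ \<theta>Z kW \<theta>W) =
    complex_of_real (1 / (ln 2 * (Beta kZ kW * Gamma (kZ + kW)))) *
    meijerG 3 2 [0, 1 - kW, 1] [0, 0, kZ] (\<theta>W / (\<rho> * \<zeta> * \<theta>Z))"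
proof -
  define a where "a = \<theta>W / (\<rho> * \<zeta> * \<theta>Z)"
  have a: "a > 0" using assms by (simp add: a_def)
  have kZ: "kZ > 0" and kW: "kW > 0" using assms by auto
  define I where "I = (LINT z|lborel. exp (kZ * z) * (1 + exp z) powr (- (kZ + kW)) * ln (1 + exp (z - ln a)))"
  have R: "ergodic_rate_c \<rho> \<zeta> kZ \<theta>Z kW \<theta>W = I / (Beta kZ kW * ln 2)"
    using ergodic_eq[OF assms] by (simp add: I_def a_def)
  define c0 where "c0 = (SOME c. meijerG_separating 3 2 [0, 1 - kW, 1] [0, 0, kZ] c)"
  have ex: "\<exists>c. meijerG_separating 3 2 [0, 1 - kW, 1] [0, 0, kZ] c"
    by (rule exI[of _ "- min 1 kW / 2"]) (use kZ kW in \<open>auto simp: meijerG_separating_def all_less_3 all_less_2\<close>)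
  have sep: "meijerG_separating 3 2 [0, 1 - kW, 1] [0, 0, kZ] c0"
    unfolding c0_def by (rule someI_ex[OF ex])
  have c: "-1 < c0" "- kW < c0" "c0 < 0"
    using sep by (auto simp: meijerG_separating_def all_less_3 all_less_2)
  have G: "meijerG 3 2 [0, 1 - kW, 1] [0, 0, kZ] a = of_real (Gamma (kZ + kW) * I)"
  proof -
    have "meijerG 3 2 [0, 1 - kW, 1] [0, 0, kZ] a = complex_of_real (1 / (2 * pi)) *
        (CLINT t|lborel. meijerG_kernel 3 2 [0, 1 - kW, 1] [0, 0, kZ] (Complex c0 t) * (of_real a) powr (Complex c0 t))"
      unfolding meijerG_def Let_def c0_def ..
    also have "\<dots> = complex_of_real (1 / (2 * pi)) * of_real (2 * pi * Gamma (kZ + kW) * I)"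
      unfolding main_MB(2)[OF kZ kW a c] I_def ..
    also have "\<dots> = of_real (1 / (2 * pi) * (2 * pi * Gamma (kZ + kW) * I))"
      by (simp only: of_real_mult)
    also have "1 / (2 * pi) * (2 * pi * Gamma (kZ + kW) * I) = Gamma (kZ + kW) * I"
      by simp
    finally show ?thesis .
  qed
  have Gk: "Gamma (kZ + kW) \<noteq> 0" using kZ kW by (simp add: Gamma_real_pos less_imp_neq[symmetric])
  have eqr: "I / (Beta kZ kW * ln 2) = 1 / (ln 2 * (Beta kZ kW * Gamma (kZ + kW))) * (Gamma (kZ + kW) * I)"
  proof (cases "Beta kZ kW = 0")
    case True then show ?thesis by simp
  next
    case False then show ?thesis using Gk by (simp add: field_simps)
  qed
  show ?thesis
    unfolding R G[unfolded a_def] eqr by (simp only: of_real_mult)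
qed


end
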